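(* Let $f_1,\dots,f_m\in\mathbb{C}[x_1,\dots,x_n]$, fix an index $k\in\{1,\dots,n\}$, and let $f_{m+1}=x_k-u_0$, where $u_0$ is an extra variable treated as a parameter. Let $B$ be a finite favourable set of monomials in $x_1,\dots,x_n$ with associated monomial-multiple sets $T_1,\dots,T_{m+1}$ and coefficient matrix $\mathbf{C}(u_0)$ (as defined in the context). Partition $B=B_1\sqcup B_2$ in one of the two ways (a) $B_1=B\cap T_{m+1}$, or (b) $B_1=\{\mathbf{x}^{\alpha}\in B \mid \mathbf{x}^{\alpha}/x_k\in T_{m+1}\}$, with $B_2=B\setminus B_1$. Order the columns of $\mathbf{C}(u_0)$ so that those indexed by $B_1$ (vector $\mathbf{b}_1$) come first, followed by those indexed by $B_2$ (vector $\mathbf{b}_2$), and order the rows so that the rows coming from $f_1,\dots,f_m$ (upper block) precede the rows coming from $f_{m+1}$ (lower block). This gives a block partition $$\mathbf{C}(u_0)\begin{bmatrix}\mathbf{b}_1\\ \mathbf{b}_2\end{bmatrix}=\begin{bmatrix}\mathbf{C}_{11}&\mathbf{C}_{12}\\ \mathbf{C}_{21}&\mathbf{C}_{22}\end{bmatrix}\begin{bmatrix}\mathbf{b}_1\\ \mathbf{b}_2\end{bmatrix}.$$ If $\mathbf{C}_{12}$ has full column rank, then the resultant matrix constraint $\mathbf{M}(u_0)\mathbf{b}=\mathbf{0}$ can be converted into an eigenvalue problem: rows may be deleted from the upper block to obtain a square matrix $\mathbf{M}(u_0)$ whose upper-right block $\hat{\mathbf{A}}_{12}$ is square and invertible, and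 there is a square matrix $\mathbf{X}$ whose entries are functions of the coefficients of $f_1,\dots,f_m$ (and do not depend on $u_0$) such that every vector $\mathbf{b}=(\mathbf{b}_1,\mathbf{b}_2)$ with $\mathbf{M}(u_0)\mathbf{b}=\mathbf{0}$ satisfies $\mathbf{X}\mathbf{b}_1=u_0\mathbf{b}_1$ in case (a), and $\mathbf{X}\mathbf{b}_1=-\frac{1}{u_0}\mathbf{b}_1$ (for $u_0\neq 0$) in case (b).
   Context: For a finite set $B$ of monomials in $x_1,\dots,x_n$ and $i=1,\dots,m+1$, let $T_i$ be the set of all monomials $t$ such that every monomial occurring in $t f_i$ lies in $B$ (for $f_{m+1}=x_k-u_0$, $u_0$ is treated as a coefficient, so this means $t x_k\in B$ and $t\in B$). It is assumed that $B$ equals the set of monomials occurring in the extended system $\{t f_i : t\in T_i,\ i=1,\dots,m+1\}$. The coefficient matrix $\mathbf{C}(u_0)$ has one row for each pair $(i,t)$ with $t\in T_i$ and one column for each monomial of $B$; the entry is the coefficient of that monomial in $t f_i$ (so entries are affine in $u_0$). $B$ is called favourable if $\sum_{j=1}^{m+1}|T_j|\ge |B|$, $\min_j |T_j|>0$, and $\mathbf{C}(u_0)$ has column rank $|B|$ for a random value of $u_0$. The resultant matrix constraint is $\mathbf{M}(u_0)\mathbf{b}=\mathbf{0}$, where $\mathbf{M}(u_0)$ is a square matrix obtained from $\mathbf{C}(u_0)$ by deleting rows and $\mathbf{b}$ is the vector of monomials of $B$ in the chosen order. *)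

theory Defs
  imports Complex_Main "HOL-Library.Poly_Mapping"
begin

text \<open>Monomials in x_1..x_n are exponent vectors (finitely supported nat-to-nat maps) whose support lies in {1..n};
  multivariate polynomials over the complex numbers are finitely supported maps from
  monomials to coefficients, with the library's convolution product.\<close>

type_synonym monom = "nat \<Rightarrow>\<^sub>0 nat"
type_synonym mpoly = "monom \<Rightarrow>\<^sub>0 complex"

definition is_monom :: "nat \<Rightarrow> monom \<Rightarrow> bool" where
  "is_monom n t \<longleftrightarrow> Poly_Mapping.keys t \<subseteq> {1..n}"

definition mono_poly :: "monom \<Rightarrow> mpoly" where
  "mono_poly t = Poly_Mapping.single t 1"

definition var_x :: "nat \<Rightarrow> monom" where
  "var_x k = Poly_Mapping.single k 1"

definition f_ext :: "nat \<Rightarrow> complex \<Rightarrow> mpoly" where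
  "f_ext k u0 = Poly_Mapping.single (var_x k) 1 - Poly_Mapping.single 0 u0"

text \<open>The sets T_i, i = 1..m+1 (index m+1 is the extra polynomial x_k - u0).\<close>
definition Tset :: "nat \<Rightarrow> (nat \<Rightarrow> mpoly) \<Rightarrow> nat \<Rightarrow> nat \<Rightarrow> monom set \<Rightarrow> nat \<Rightarrow> monom set" where
  "Tset n f m k B i =
     (if i \<le> m then {t. is_monom n t \<and> Poly_Mapping.keys (mono_poly t * f i) \<subseteq> B}
      else {t. t \<in> B \<and> t + var_x k \<in> B})"

definition rows :: "nat \<Rightarrow> (nat \<Rightarrow> mpoly) \<Rightarrow> nat \<Rightarrow> nat \<Rightarrow> monom set \<Rightarrow> (nat \<times> monom) set" where
  "rows n f m k B = {(i, t). i \<in> {1..m+1} \<and> t \<in> Tset n f m k B i}"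

definition upper_rows where
  "upper_rows n f m k B = {(i, t) \<in> rows n f m k B. i \<le> m}"

definition lower_rows where
  "lower_rows n f m k B = {(i, t) \<in> rows n f m k B. i = m + 1}"

definition Cmat :: "(nat \<Rightarrow> mpoly) \<Rightarrow> nat \<Rightarrow> nat \<Rightarrow> complex \<Rightarrow> nat \<times> monom \<Rightarrow> monom \<Rightarrow> complex" where
  "Cmat f m k u0 r beta =
     (case r of (i, t) \<Rightarrow>
        Poly_Mapping.lookup (mono_poly t * (if i \<le> m then f i else f_ext k u0)) beta)"

definition B_generated :: "nat \<Rightarrow> (nat \<Rightarrow> mpoly) \<Rightarrow> nat \<Rightarrow> nat \<Rightarrow> monom set \<Rightarrow> bool" where
  "B_generated n f m k B \<longleftrightarrow>
     B = (\<Union>i\<in>{1..m}. \<Union>t\<in>Tset n f m k B i. Poly_Mapping.keys (mono_poly t * f i))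
         \<union> (\<Union>t\<in>Tset n f m k B (m+1). {t, t + var_x k})"

definition full_column_rank :: "'r set \<Rightarrow> 'c set \<Rightarrow> ('r \<Rightarrow> 'c \<Rightarrow> complex) \<Rightarrow> bool" where
  "full_column_rank R Cs A \<longleftrightarrow>
     (\<forall>v. (\<forall>r\<in>R. (\<Sum>c\<in>Cs. A r c * v c) = 0) \<longrightarrow> (\<forall>c\<in>Cs. v c = 0))"

definition square_invertible :: "'r set \<Rightarrow> 'c set \<Rightarrow> ('r \<Rightarrow> 'c \<Rightarrow> complex) \<Rightarrow> bool" where
  "square_invertible R Cs A \<longleftrightarrow> finite R \<and> finite Cs \<and> card R = card Cs \<and>
     (\<exists>N :: 'c \<Rightarrow> 'r \<Rightarrow> complex.
        (\<forall>r\<in>R. \<forall>r'\<in>R. (\<Sum>c\<in>Cs. A r c * N c r') = (if r = r' then 1 else 0)) \<and>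
        (\<forall>c\<in>Cs. \<forall>c'\<in>Cs. (\<Sum>r\<in>R. N c r * A r c') = (if c = c' then 1 else 0)))"

text \<open>Favourable: sum |T_j| \<ge> |B|, min |T_j| > 0, and C(u0) has column rank |B|
  for a generic (random) u0, i.e. for all but finitely many u0.\<close>
definition favourable :: "nat \<Rightarrow> (nat \<Rightarrow> mpoly) \<Rightarrow> nat \<Rightarrow> nat \<Rightarrow> monom set \<Rightarrow> bool" where
  "favourable n f m k B \<longleftrightarrow>
     (\<Sum>j=1..m+1. card (Tset n f m k B j)) \<ge> card B \<and>
     (\<forall>j\<in>{1..m+1}. card (Tset n f m k B j) > 0) \<and>
     finite {u0. \<not> full_column_rank (rows n f m k B) B (Cmat f m k u0)}"

definition B1_a where "B1_a n f m k B = B \<inter> Tset n f m k B (m+1)"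
definition B1_b where
  "B1_b n f m k B = {beta \<in> B. \<exists>t\<in>Tset n f m k B (m+1). beta = t + var_x k}"

end

theory Submission
  imports Defs
begin

lemma delta_sum: "finite S \<Longrightarrow> (c::'a) \<in> S \<Longrightarrow> (\<Sum>\<beta>\<in>S. (if \<beta> = c then 1 else 0) * (g \<beta>::complex)) = g c"
proof -
  assume "finite S" "c \<in> S"
  have "(\<Sum>\<beta>\<in>S. (if \<beta> = c then 1 else 0) * (g \<beta>::complex)) = (\<Sum>\<beta>\<in>S. if \<beta> = c then g \<beta> else 0)"
    by (rule sum.cong) auto
  then show ?thesis using \<open>finite S\<close> \<open>c \<in> S\<close> by simp
qed
lemma lower_entry:
  "Cmat f m k u0 (Suc m, t) beta = (if beta = t + var_x k then 1 else 0) - (if beta = t then u0 else 0)"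
  unfolding Cmat_def f_ext_def mono_poly_def
  by (simp add: right_diff_distrib mult_single lookup_minus lookup_single when_def)


lemma lower_sum:
  assumes "finite B" "t \<in> B" "t + var_x k \<in> B"
  shows "(\<Sum>beta\<in>B. Cmat f m k u0 (Suc m, t) beta * b beta) = b (t + var_x k) - u0 * b t"
proof -
  have "(\<Sum>beta\<in>B. Cmat f m k u0 (Suc m, t) beta * b beta)
      = (\<Sum>beta\<in>B. (if beta = t + var_x k then 1 else 0) * b beta) - (\<Sum>beta\<in>B. (if beta = t then 1 else 0) * (u0 * b beta))"
    by (simp add: lower_entry left_diff_distrib sum_subtractf if_distrib[of "\<lambda>z. z * _"] cong: if_cong)
  then show ?thesis using assms by (simp add: delta_sum)
qed

lemma solve_B2:
  fixes A :: "'r \<Rightarrow> 'c \<Rightarrow> complex"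
  assumes "finite B" "B1 \<subseteq> B" "finite R'"
    and N: "\<forall>c\<in>B-B1. \<forall>c'\<in>B-B1. (\<Sum>r\<in>R'. N c r * A r c') = (if c = c' then 1 else 0)"
    and hb: "\<forall>r\<in>R'. (\<Sum>beta\<in>B. A r beta * b beta) = 0" and c: "c \<in> B - B1"
  shows "b c = (\<Sum>beta\<in>B1. (- (\<Sum>r\<in>R'. N c r * A r beta)) * b beta)"
proof -
  have split: "(\<Sum>beta\<in>B-B1. A r beta * b beta) = - (\<Sum>beta\<in>B1. A r beta * b beta)" if "r \<in> R'" for r
    using hb that sum.subset_diff[OF assms(2) assms(1), of "\<lambda>beta. A r beta * b beta"]
    by (simp add: eq_neg_iff_add_eq_0)
  have "b c = (\<Sum>c'\<in>B-B1. (if c' = c then 1 else 0) * b c')"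
    using c assms(1) by (simp add: delta_sum)
  also have "\<dots> = (\<Sum>c'\<in>B-B1. (\<Sum>r\<in>R'. N c r * A r c') * b c')"
    using N c by (intro sum.cong) auto
  also have "\<dots> = (\<Sum>r\<in>R'. N c r * (\<Sum>c'\<in>B-B1. A r c' * b c'))"
    by (simp add: sum_distrib_left sum_distrib_right sum.swap[of _ "B-B1"] mult.assoc)
  also have "\<dots> = (\<Sum>r\<in>R'. N c r * (- (\<Sum>beta\<in>B1. A r beta * b beta)))"
    using split by (intro sum.cong) auto
  also have "\<dots> = (\<Sum>beta\<in>B1. (- (\<Sum>r\<in>R'. N c r * A r beta)) * b beta)"
    by (simp add: sum_distrib_left sum_distrib_right sum.swap[of _ "B1"] mult.assoc sum_negf)
  finally show ?thesis .
qed


lemma block_inverse: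
  fixes A A' :: "'r \<Rightarrow> 'c \<Rightarrow> complex" and N0 :: "'c \<Rightarrow> 'r \<Rightarrow> complex"
  assumes finC: "finite C" and finR: "finite R0" and c0: "c0 \<notin> C" and r0: "r0 \<notin> R0"
    and a0: "A r0 c0 \<noteq> 0"
    and inv1: "\<forall>r\<in>R0. \<forall>r'\<in>R0. (\<Sum>c\<in>C. A' r c * N0 c r') = (if r = r' then 1 else 0)"
    and inv2: "\<forall>c\<in>C. \<forall>c'\<in>C. (\<Sum>r\<in>R0. N0 c r * A' r c') = (if c = c' then 1 else 0)"
    and Adef: "\<forall>r\<in>R0. \<forall>c\<in>C. A r c = A' r c + A r c0 / A r0 c0 * A r0 c"
  shows "\<exists>N. (\<forall>r\<in>insert r0 R0. \<forall>r'\<in>insert r0 R0.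
             (\<Sum>c\<in>insert c0 C. A r c * N c r') = (if r = r' then 1 else 0)) \<and>
            (\<forall>c\<in>insert c0 C. \<forall>c'\<in>insert c0 C.
             (\<Sum>r\<in>insert r0 R0. N c r * A r c') = (if c = c' then 1 else 0))"
proof -
  define a where "a = A r0 c0"
  define w where "w r = A r c0" for r
  define u where "u c = A r0 c" for c
  define p where "p r = (\<Sum>c\<in>C. u c * N0 c r)" for r
  define q where "q c = (\<Sum>r\<in>R0. N0 c r * w r)" for c
  define s where "s = (\<Sum>r\<in>R0. p r * w r)"
  define N where "N c r = (if c = c0 then (if r = r0 then 1/a + s/a^2 else - p r / a)
                           else (if r = r0 then - q c / a else N0 c r))" for c r
  have a: "a \<noteq> 0" using a0 a_def by simp
  have Ad: "A r c = A' r c + w r / a * u c" if "r \<in> R0" "c \<in> C" for r c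
    using Adef that by (simp add: a_def w_def u_def)
  have K1: "(\<Sum>c\<in>C. u c * q c) = s"
    unfolding q_def s_def p_def
    by (simp add: sum_distrib_left sum_distrib_right sum.swap[of _ C] mult.assoc)
  have K2: "(\<Sum>c\<in>C. A' r c * q c) = w r" if "r \<in> R0" for r
  proof -
    have "(\<Sum>c\<in>C. A' r c * q c) = (\<Sum>r''\<in>R0. (\<Sum>c\<in>C. A' r c * N0 c r'') * w r'')"
      unfolding q_def
      by (simp add: sum_distrib_left sum_distrib_right sum.swap[of _ C] mult.assoc)
    also have "\<dots> = (\<Sum>r''\<in>R0. (if r = r'' then w r'' else 0))"
      using inv1 that by (intro sum.cong) auto
    also have "\<dots> = w r" using that finR by simp
    finally show ?thesis .
  qed
  have K3: "(\<Sum>r\<in>R0. p r * A' r c') = u c'" if "c' \<in> C" for c'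
  proof -
    have "(\<Sum>r\<in>R0. p r * A' r c') = (\<Sum>c\<in>C. u c * (\<Sum>r\<in>R0. N0 c r * A' r c'))"
      unfolding p_def
      by (simp add: sum_distrib_left sum_distrib_right sum.swap[of _ C] mult.assoc)
    also have "\<dots> = (\<Sum>c\<in>C. (if c = c' then u c else 0))"
      using inv2 that by (intro sum.cong) auto
    also have "\<dots> = u c'" using that finC by simp
    finally show ?thesis .
  qed
  have NC: "(\<Sum>c\<in>C. g c * N c r) = (\<Sum>c\<in>C. g c * (if r = r0 then - q c / a else N0 c r))" for g r
    using c0 by (intro sum.cong) (auto simp: N_def)
  have NR: "(\<Sum>r\<in>R0. N c r * g r) = (\<Sum>r\<in>R0. (if c = c0 then - p r / a else N0 c r) * g r)" for g c
    using r0 by (intro sum.cong) (auto simp: N_def)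
  have S1: "\<forall>r\<in>insert r0 R0. \<forall>r'\<in>insert r0 R0.
             (\<Sum>c\<in>insert c0 C. A r c * N c r') = (if r = r' then 1 else 0)"
  proof (intro ballI)
    fix r r' assume r: "r \<in> insert r0 R0" and r': "r' \<in> insert r0 R0"
    have e: "(\<Sum>c\<in>insert c0 C. A r c * N c r') = A r c0 * N c0 r' + (\<Sum>c\<in>C. A r c * N c r')"
      using finC c0 by simp
    show "(\<Sum>c\<in>insert c0 C. A r c * N c r') = (if r = r' then 1 else 0)"
    proof (cases "r = r0")
      case True
      note rr = True
      show ?thesis
      proof (cases "r' = r0")
        case True
        have "(\<Sum>c\<in>C. A r c * N c r') = - s / a"
          using K1 rr True by (simp add: NC sum_divide_distrib[symmetric] sum_negf u_def)
        then show ?thesis using e rr True a by (simp add: N_def a_def field_simps power2_eq_square)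
      next
        case False
        then have "r' \<in> R0" using r' by auto
        have "(\<Sum>c\<in>C. A r c * N c r') = p r'"
          using rr False by (simp add: NC p_def u_def)
        then show ?thesis using e rr False a r0 \<open>r' \<in> R0\<close> by (auto simp: N_def a_def)
      qed
    next
      case False
      note rr = False
      then have rR: "r \<in> R0" using r by auto
      show ?thesis
      proof (cases "r' = r0")
        case True
        have "(\<Sum>c\<in>C. A r c * N c r') = - (\<Sum>c\<in>C. A r c * q c) / a"
          using True by (simp add: NC sum_divide_distrib[symmetric] sum_negf)
        also have "(\<Sum>c\<in>C. A r c * q c) = (\<Sum>c\<in>C. A' r c * q c + w r / a * (u c * q c))"
          using rR by (intro sum.cong) (auto simp: Ad algebra_simps)
        also have "\<dots> = w r + w r / a * s"
          by (simp only: sum.distrib sum_distrib_left[symmetric] K1 K2[OF rR])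
        finally show ?thesis using e rr True a r0 rR
          by (simp add: N_def w_def field_simps power2_eq_square)
      next
        case False
        then have "r' \<in> R0" using r' by auto
        have "(\<Sum>c\<in>C. A r c * N c r') = (\<Sum>c\<in>C. A' r c * N0 c r' + w r / a * (u c * N0 c r'))"
          using False rR by (simp add: NC) (intro sum.cong, auto simp: Ad algebra_simps)
        also have "\<dots> = (if r = r' then 1 else 0) + w r / a * p r'"
          using inv1 rR \<open>r' \<in> R0\<close> by (simp only: sum.distrib sum_distrib_left[symmetric] p_def, simp?)
        finally show ?thesis using e rr False a r0 rR \<open>r' \<in> R0\<close>
          by (simp add: N_def w_def field_simps)
      qed
    qed
  qed
  have S2: "\<forall>c\<in>insert c0 C. \<forall>c'\<in>insert c0 C.
             (\<Sum>r\<in>insert r0 R0. N c r * A r c') = (if c = c' then 1 else 0)"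
  proof (intro ballI)
    fix c c' assume c: "c \<in> insert c0 C" and c': "c' \<in> insert c0 C"
    have e: "(\<Sum>r\<in>insert r0 R0. N c r * A r c') = N c r0 * A r0 c' + (\<Sum>r\<in>R0. N c r * A r c')"
      using finR r0 by simp
    show "(\<Sum>r\<in>insert r0 R0. N c r * A r c') = (if c = c' then 1 else 0)"
    proof (cases "c = c0")
      case True
      note cc = True
      show ?thesis
      proof (cases "c' = c0")
        case True
        have "(\<Sum>r\<in>R0. N c r * A r c') = - s / a"
          using cc True by (simp add: NR sum_divide_distrib[symmetric] sum_negf s_def w_def)
        then show ?thesis using e cc True a by (simp add: N_def a_def field_simps power2_eq_square)
      next
        case False
        then have c'C: "c' \<in> C" using c' by auto
        have "(\<Sum>r\<in>R0. N c r * A r c') = - (\<Sum>r\<in>R0. p r * A r c') / a"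
          using cc by (simp add: NR sum_divide_distrib[symmetric] sum_negf)
        also have "(\<Sum>r\<in>R0. p r * A r c') = (\<Sum>r\<in>R0. p r * A' r c' + u c' / a * (p r * w r))"
          using c'C by (intro sum.cong) (auto simp: Ad algebra_simps)
        also have "\<dots> = u c' + u c' / a * s"
          by (simp only: sum.distrib sum_distrib_left[symmetric] K3[OF c'C] s_def)
        finally show ?thesis using e cc False a c0 c'C
          by (simp add: N_def u_def field_simps power2_eq_square)
      qed
    next
      case False
      note cc = False
      then have cC: "c \<in> C" using c by auto
      show ?thesis
      proof (cases "c' = c0")
        case True
        have "(\<Sum>r\<in>R0. N c r * A r c') = q c"
          using cc True by (simp add: NR q_def w_def)
        then show ?thesis using e cc True a c0 cC by (auto simp: N_def a_def)
      next
        case False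
        then have c'C: "c' \<in> C" using c' by auto
        have "(\<Sum>r\<in>R0. N c r * A r c') = (\<Sum>r\<in>R0. N0 c r * A' r c' + u c' / a * (N0 c r * w r))"
          using cc c'C by (simp add: NR) (intro sum.cong, auto simp: Ad algebra_simps)
        also have "\<dots> = (if c = c' then 1 else 0) + u c' / a * q c"
          using inv2 cC c'C by (simp only: sum.distrib sum_distrib_left[symmetric] q_def, simp?)
        finally show ?thesis using e cc False a c0 cC c'C
          by (simp add: N_def u_def field_simps)
      qed
    qed
  qed
  show ?thesis using S1 S2 by blast
qed

lemma select_rows:
  fixes A :: "'r \<Rightarrow> 'c \<Rightarrow> complex"
  assumes "finite C" "finite R" "full_column_rank R C A"
  shows "\<exists>R'\<subseteq>R. square_invertible R' C A"
  using assms
proof (induction C arbitrary: R A rule: finite_induct)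
  case empty
  show ?case
    by (rule exI[of _ "{}"]) (simp add: square_invertible_def)
next
  case (insert c0 C)
  have "\<exists>r0\<in>R. A r0 c0 \<noteq> 0"
  proof (rule ccontr)
    assume "\<not> ?thesis"
    then have "\<forall>r\<in>R. (\<Sum>c\<in>insert c0 C. A r c * (if c = c0 then 1 else 0)) = 0"
      using insert.hyps by (simp add: if_distrib cong: if_cong)
    then show False using insert.prems(2) unfolding full_column_rank_def by fastforce
  qed
  then obtain r0 where r0: "r0 \<in> R" "A r0 c0 \<noteq> 0" by blast
  define A' where "A' r c = A r c - A r c0 / A r0 c0 * A r0 c" for r c
  have fr: "full_column_rank (R - {r0}) C A'"
    unfolding full_column_rank_def
  proof (intro allI impI)
    fix v assume hv: "\<forall>r\<in>R - {r0}. (\<Sum>c\<in>C. A' r c * v c) = 0"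
    define v' where "v' c = (if c = c0 then - (\<Sum>c\<in>C. A r0 c * v c) / A r0 c0 else v c)" for c
    have vC: "(\<Sum>c\<in>C. g c * v' c) = (\<Sum>c\<in>C. g c * v c)" for g
      using insert.hyps by (intro sum.cong) (auto simp: v'_def)
    have "\<forall>r\<in>R. (\<Sum>c\<in>insert c0 C. A r c * v' c) = 0"
    proof
      fix r assume rR: "r \<in> R"
      have e: "(\<Sum>c\<in>insert c0 C. A r c * v' c) = A r c0 * v' c0 + (\<Sum>c\<in>C. A r c * v c)"
        using insert.hyps by (simp add: vC)
      show "(\<Sum>c\<in>insert c0 C. A r c * v' c) = 0"
      proof (cases "r = r0")
        case True
        then show ?thesis using e r0 by (simp add: v'_def)
      next
        case False
        have "(\<Sum>c\<in>C. A' r c * v c) = (\<Sum>c\<in>C. A r c * v c) - A r c0 / A r0 c0 * (\<Sum>c\<in>C. A r0 c * v c)"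
          unfolding A'_def by (simp add: sum_distrib_left sum_subtractf algebra_simps)
        then have "(\<Sum>c\<in>C. A r c * v c) = A r c0 / A r0 c0 * (\<Sum>c\<in>C. A r0 c * v c)"
          using hv False rR by auto
        then show ?thesis using e r0 by (simp add: v'_def)
      qed
    qed
    then have "\<forall>c\<in>insert c0 C. v' c = 0" using insert.prems(2) unfolding full_column_rank_def by blast
    then show "\<forall>c\<in>C. v c = 0" using insert.hyps by (auto simp: v'_def split: if_splits)
  qed
  from insert.IH[OF _ fr] insert.prems obtain R0 where R0: "R0 \<subseteq> R - {r0}" "square_invertible R0 C A'"
    by auto
  then obtain N0 where N0: "\<forall>r\<in>R0. \<forall>r'\<in>R0. (\<Sum>c\<in>C. A' r c * N0 c r') = (if r = r' then 1 else 0)"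
     "\<forall>c\<in>C. \<forall>c'\<in>C. (\<Sum>r\<in>R0. N0 c r * A' r c') = (if c = c' then 1 else 0)"
    and fin: "finite R0" "card R0 = card C"
    unfolding square_invertible_def by blast
  have r0R0: "r0 \<notin> R0" using R0 by auto
  have "\<forall>r\<in>R0. \<forall>c\<in>C. A r c = A' r c + A r c0 / A r0 c0 * A r0 c" by (simp add: A'_def)
  from block_inverse[OF insert.hyps(1) fin(1) insert.hyps(2) r0R0 r0(2) N0 this]
  obtain N where "\<forall>r\<in>insert r0 R0. \<forall>r'\<in>insert r0 R0.
             (\<Sum>c\<in>insert c0 C. A r c * N c r') = (if r = r' then 1 else 0)"
     "\<forall>c\<in>insert c0 C. \<forall>c'\<in>insert c0 C.
             (\<Sum>r\<in>insert r0 R0. N c r * A r c') = (if c = c' then 1 else 0)" by blast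
  moreover have "card (insert r0 R0) = card (insert c0 C)"
    using fin r0R0 insert.hyps by simp
  ultimately have "square_invertible (insert r0 R0) (insert c0 C) A"
    unfolding square_invertible_def using fin insert.hyps by blast
  moreover have "insert r0 R0 \<subseteq> R" using R0 r0 by auto
  ultimately show ?case by blast
qed



lemma common:
  assumes finB: "finite B" and fav: "favourable n f m k B"
    and B1: "B1 \<subseteq> B" and cardB1: "card B1 = card (Tset n f m k B (m+1))"
    and fcr: "full_column_rank (upper_rows n f m k B) (B - B1) (Cmat f m k 0)"
  shows "\<exists>R' \<subseteq> upper_rows n f m k B. card (R' \<union> lower_rows n f m k B) = card B \<and>
         square_invertible R' (B - B1) (Cmat f m k 0) \<and>
         (\<exists>G. \<forall>u0 b. (\<forall>r\<in>R' \<union> lower_rows n f m k B. (\<Sum>beta\<in>B. Cmat f m k u0 r beta * b beta) = 0) \<longrightarrow>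
             (\<forall>c\<in>B - B1. b c = (\<Sum>beta\<in>B1. G c beta * b beta)) \<and>
             (\<forall>t\<in>Tset n f m k B (m+1). b (t + var_x k) = u0 * b t))"
proof -
  define T where "T = Tset n f m k B (m+1)"
  define U where "U = upper_rows n f m k B"
  define L where "L = lower_rows n f m k B"
  have T: "T = {t. t \<in> B \<and> t + var_x k \<in> B}" by (simp add: T_def Tset_def)
  have finT: "finite T" using T finB by simp
  have finTi: "finite (Tset n f m k B i)" if "i \<in> {1..m}" for i
    using fav that unfolding favourable_def by (intro card_ge_0_finite) auto
  have "U \<subseteq> Sigma {1..m} (\<lambda>i. Tset n f m k B i)"
    by (auto simp: U_def upper_rows_def rows_def)
  moreover have "finite (Sigma {1..m} (\<lambda>i. Tset n f m k B i))" using finTi by (intro finite_SigmaI) auto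
  ultimately have finU: "finite U" by (rule finite_subset)
  have L: "L = (\<lambda>t. (Suc m, t)) ` T"
    by (auto simp: L_def lower_rows_def rows_def T_def)
  have cardL: "card L = card T" unfolding L by (rule card_image) (auto simp: inj_on_def)
  have UL: "U \<inter> L = {}" by (auto simp: U_def upper_rows_def L_def lower_rows_def)
  obtain R' where R': "R' \<subseteq> U" "square_invertible R' (B - B1) (Cmat f m k 0)"
    using select_rows[of "B - B1" U "Cmat f m k 0"] finB finU fcr by (auto simp: U_def)
  then obtain N where fR': "finite R'" and cR': "card R' = card (B - B1)"
    and N: "\<forall>c\<in>B-B1. \<forall>c'\<in>B-B1. (\<Sum>r\<in>R'. N c r * Cmat f m k 0 r c') = (if c = c' then 1 else 0)"
    unfolding square_invertible_def by blast
  have "card (R' \<union> L) = card R' + card L"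
    using UL R'(1) fR' finT L by (intro card_Un_disjoint) auto
  also have "\<dots> = card B" using cR' cardL cardB1 T_def card_Diff_subset[OF finite_subset[OF B1 finB] B1]
      card_mono[OF finB B1] by simp
  finally have card: "card (R' \<union> L) = card B" .
  have upper_eq: "Cmat f m k u0 r beta = Cmat f m k 0 r beta" if "r \<in> U" for u0 r beta
    using that by (auto simp: U_def upper_rows_def Cmat_def)
  define G where "G c beta = - (\<Sum>r\<in>R'. N c r * Cmat f m k 0 r beta)" for c beta
  have "\<forall>u0 b. (\<forall>r\<in>R' \<union> L. (\<Sum>beta\<in>B. Cmat f m k u0 r beta * b beta) = 0) \<longrightarrow>
             (\<forall>c\<in>B - B1. b c = (\<Sum>beta\<in>B1. G c beta * b beta)) \<and>
             (\<forall>t\<in>T. b (t + var_x k) = u0 * b t)"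
  proof (intro allI impI conjI ballI)
    fix u0 b c assume h: "\<forall>r\<in>R' \<union> L. (\<Sum>beta\<in>B. Cmat f m k u0 r beta * b beta) = 0"
      and c: "c \<in> B - B1"
    have "\<forall>r\<in>R'. (\<Sum>beta\<in>B. Cmat f m k 0 r beta * b beta) = 0"
    proof
      fix r assume r: "r \<in> R'"
      then have "r \<in> U" using R'(1) by blast
      then have "(\<Sum>beta\<in>B. Cmat f m k 0 r beta * b beta) = (\<Sum>beta\<in>B. Cmat f m k u0 r beta * b beta)"
        by (metis upper_eq)
      then show "(\<Sum>beta\<in>B. Cmat f m k 0 r beta * b beta) = 0" using h r by simp
    qed
    from solve_B2[OF finB B1 fR' N this c] show "b c = (\<Sum>beta\<in>B1. G c beta * b beta)"
      by (simp add: G_def)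
  next
    fix u0 b t assume h: "\<forall>r\<in>R' \<union> L. (\<Sum>beta\<in>B. Cmat f m k u0 r beta * b beta) = 0"
      and t: "t \<in> T"
    have "(Suc m, t) \<in> L" using t L by auto
    then have "(\<Sum>beta\<in>B. Cmat f m k u0 (Suc m, t) beta * b beta) = 0" using h by blast
    then show "b (t + var_x k) = u0 * b t" using lower_sum[OF finB] t T by auto
  qed
  then show ?thesis using R' card by (auto simp: U_def L_def T_def)
qed



theorem proposition1:
  fixes n m k :: nat and f :: "nat \<Rightarrow> mpoly" and B :: "monom set"
  assumes "k \<in> {1..n}"
    and "\<forall>i\<in>{1..m}. \<forall>s\<in>Poly_Mapping.keys (f i). is_monom n s"
    and "finite B" and "\<forall>beta\<in>B. is_monom n beta"
    and "B_generated n f m k B"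
    and "favourable n f m k B"
  shows
   "(let B1 = B1_a n f m k B; B2 = B - B1;
         U = upper_rows n f m k B; L = lower_rows n f m k B in
      full_column_rank U B2 (Cmat f m k 0) \<longrightarrow>
      (\<exists>R' \<subseteq> U. card (R' \<union> L) = card B \<and>
         square_invertible R' B2 (Cmat f m k 0) \<and>
         (\<exists>X :: monom \<Rightarrow> monom \<Rightarrow> complex. \<forall>u0 (b :: monom \<Rightarrow> complex).
            (\<forall>r\<in>R' \<union> L. (\<Sum>beta\<in>B. Cmat f m k u0 r beta * b beta) = 0) \<longrightarrow>
            (\<forall>alpha\<in>B1. (\<Sum>beta\<in>B1. X alpha beta * b beta) = u0 * b alpha))))
    \<and>
    (let B1 = B1_b n f m k B; B2 = B - B1;
         U = upper_rows n f m k B; L = lower_rows n f m k B in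
      full_column_rank U B2 (Cmat f m k 0) \<longrightarrow>
      (\<exists>R' \<subseteq> U. card (R' \<union> L) = card B \<and>
         square_invertible R' B2 (Cmat f m k 0) \<and>
         (\<exists>X :: monom \<Rightarrow> monom \<Rightarrow> complex. \<forall>u0 (b :: monom \<Rightarrow> complex).
            u0 \<noteq> 0 \<longrightarrow>
            (\<forall>r\<in>R' \<union> L. (\<Sum>beta\<in>B. Cmat f m k u0 r beta * b beta) = 0) \<longrightarrow>
            (\<forall>alpha\<in>B1. (\<Sum>beta\<in>B1. X alpha beta * b beta) = - (1 / u0) * b alpha))))"
proof -
  note finB = assms(3) and fav = assms(6)
  define T where "T = Tset n f m k B (m+1)"
  define U where "U = upper_rows n f m k B"
  define L where "L = lower_rows n f m k B"
  define x where "x = var_x k"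
  have T: "T = {t. t \<in> B \<and> t + x \<in> B}" by (simp add: T_def Tset_def x_def)
  have finT: "finite T" using T finB by simp
  have P1: "full_column_rank U (B - B1_a n f m k B) (Cmat f m k 0) \<longrightarrow>
      (\<exists>R' \<subseteq> U. card (R' \<union> L) = card B \<and>
         square_invertible R' (B - B1_a n f m k B) (Cmat f m k 0) \<and>
         (\<exists>X :: monom \<Rightarrow> monom \<Rightarrow> complex. \<forall>u0 (b :: monom \<Rightarrow> complex).
            (\<forall>r\<in>R' \<union> L. (\<Sum>beta\<in>B. Cmat f m k u0 r beta * b beta) = 0) \<longrightarrow>
            (\<forall>alpha\<in>B1_a n f m k B. (\<Sum>beta\<in>B1_a n f m k B. X alpha beta * b beta) = u0 * b alpha)))"
  proof
    assume fcr: "full_column_rank U (B - B1_a n f m k B) (Cmat f m k 0)"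
    have B1: "B1_a n f m k B = T" using T by (auto simp: B1_a_def T_def)
    obtain R' G where R': "R' \<subseteq> U" "card (R' \<union> L) = card B" "square_invertible R' (B - T) (Cmat f m k 0)"
      and G: "\<And>u0 b. (\<forall>r\<in>R' \<union> L. (\<Sum>beta\<in>B. Cmat f m k u0 r beta * b beta) = 0) \<Longrightarrow>
             (\<forall>c\<in>B - T. b c = (\<Sum>beta\<in>T. G c beta * b beta)) \<and>
             (\<forall>t\<in>T. b (t + x) = u0 * b t)"
      using common[OF finB fav, of T] fcr B1 T by (auto simp: U_def L_def T_def x_def)
    define X where "X alpha beta = (if alpha + x \<in> T then (if beta = alpha + x then 1 else 0) else G (alpha + x) beta)" for alpha beta
    have "\<forall>u0 (b :: monom \<Rightarrow> complex).
            (\<forall>r\<in>R' \<union> L. (\<Sum>beta\<in>B. Cmat f m k u0 r beta * b beta) = 0) \<longrightarrow>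
            (\<forall>alpha\<in>T. (\<Sum>beta\<in>T. X alpha beta * b beta) = u0 * b alpha)"
    proof (intro allI impI ballI)
      fix u0 b alpha assume h: "\<forall>r\<in>R' \<union> L. (\<Sum>beta\<in>B. Cmat f m k u0 r beta * b beta) = 0"
        and a: "alpha \<in> T"
      note G' = G[OF h]
      show "(\<Sum>beta\<in>T. X alpha beta * b beta) = u0 * b alpha"
      proof (cases "alpha + x \<in> T")
        case True
        then have "(\<Sum>beta\<in>T. X alpha beta * b beta) = b (alpha + x)"
          using finT by (simp add: X_def delta_sum)
        then show ?thesis using G' a by simp
      next
        case False
        then have "(\<Sum>beta\<in>T. X alpha beta * b beta) = (\<Sum>beta\<in>T. G (alpha + x) beta * b beta)"
          by (simp add: X_def)
        also have "\<dots> = b (alpha + x)" using G' False a T by auto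
        finally show ?thesis using G' a by simp
      qed
    qed
    then show "\<exists>R' \<subseteq> U. card (R' \<union> L) = card B \<and>
         square_invertible R' (B - B1_a n f m k B) (Cmat f m k 0) \<and>
         (\<exists>X :: monom \<Rightarrow> monom \<Rightarrow> complex. \<forall>u0 (b :: monom \<Rightarrow> complex).
            (\<forall>r\<in>R' \<union> L. (\<Sum>beta\<in>B. Cmat f m k u0 r beta * b beta) = 0) \<longrightarrow>
            (\<forall>alpha\<in>B1_a n f m k B. (\<Sum>beta\<in>B1_a n f m k B. X alpha beta * b beta) = u0 * b alpha))"
      using R' B1 by blast
  qed
  have P2: "full_column_rank U (B - B1_b n f m k B) (Cmat f m k 0) \<longrightarrow>
      (\<exists>R' \<subseteq> U. card (R' \<union> L) = card B \<and>
         square_invertible R' (B - B1_b n f m k B) (Cmat f m k 0) \<and>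
         (\<exists>X :: monom \<Rightarrow> monom \<Rightarrow> complex. \<forall>u0 (b :: monom \<Rightarrow> complex).
            u0 \<noteq> 0 \<longrightarrow>
            (\<forall>r\<in>R' \<union> L. (\<Sum>beta\<in>B. Cmat f m k u0 r beta * b beta) = 0) \<longrightarrow>
            (\<forall>alpha\<in>B1_b n f m k B. (\<Sum>beta\<in>B1_b n f m k B. X alpha beta * b beta) = - (1 / u0) * b alpha)))"
  proof
    define B1 where "B1 = B1_b n f m k B"
    assume fcr: "full_column_rank U (B - B1_b n f m k B) (Cmat f m k 0)"
    have B1: "B1 = (\<lambda>t. t + x) ` T" using T by (auto simp: B1_def B1_b_def T_def x_def)
    have B1B: "B1 \<subseteq> B" using B1 T by auto
    have cB1: "card B1 = card T" unfolding B1 by (rule card_image) (auto simp: inj_on_def)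
    obtain R' G where R': "R' \<subseteq> U" "card (R' \<union> L) = card B" "square_invertible R' (B - B1) (Cmat f m k 0)"
      and G: "\<And>u0 b. (\<forall>r\<in>R' \<union> L. (\<Sum>beta\<in>B. Cmat f m k u0 r beta * b beta) = 0) \<Longrightarrow>
             (\<forall>c\<in>B - B1. b c = (\<Sum>beta\<in>B1. G c beta * b beta)) \<and>
             (\<forall>t\<in>T. b (t + x) = u0 * b t)"
      using common[OF finB fav B1B] cB1 fcr by (auto simp: U_def L_def T_def x_def B1_def)
    have finB1: "finite B1" using B1 finT by simp
    define X where "X alpha beta = - (if alpha - x \<in> B1 then (if beta = alpha - x then 1 else 0) else G (alpha - x) beta)" for alpha beta
    have "\<forall>u0 (b :: monom \<Rightarrow> complex). u0 \<noteq> 0 \<longrightarrow>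
            (\<forall>r\<in>R' \<union> L. (\<Sum>beta\<in>B. Cmat f m k u0 r beta * b beta) = 0) \<longrightarrow>
            (\<forall>alpha\<in>B1. (\<Sum>beta\<in>B1. X alpha beta * b beta) = - (1 / u0) * b alpha)"
    proof (intro allI impI ballI)
      fix u0 b alpha assume u0: "u0 \<noteq> 0" and h: "\<forall>r\<in>R' \<union> L. (\<Sum>beta\<in>B. Cmat f m k u0 r beta * b beta) = 0"
        and a: "alpha \<in> B1"
      note G' = G[OF h]
      obtain t where t: "t \<in> T" "alpha = t + x" using a B1 by auto
      have tx: "alpha - x = t" using t by simp
      have tB: "t \<in> B" using t T by auto
      have bt: "b t = b alpha / u0" using G' t u0 by (simp add: field_simps)
      have "(\<Sum>beta\<in>B1. X alpha beta * b beta) = - b t"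
      proof (cases "t \<in> B1")
        case True
        then have "(\<Sum>beta\<in>B1. X alpha beta * b beta) = - (\<Sum>beta\<in>B1. (if beta = t then 1 else 0) * b beta)"
          by (simp add: X_def tx sum_negf)
        then show ?thesis using True finB1 by (simp add: delta_sum)
      next
        case False
        then have "(\<Sum>beta\<in>B1. X alpha beta * b beta) = - (\<Sum>beta\<in>B1. G t beta * b beta)"
          by (simp add: X_def tx sum_negf)
        also have "\<dots> = - b t" using G' False tB by auto
        finally show ?thesis .
      qed
      then show "(\<Sum>beta\<in>B1. X alpha beta * b beta) = - (1 / u0) * b alpha" using bt by simp
    qed
    then show "\<exists>R' \<subseteq> U. card (R' \<union> L) = card B \<and>
         square_invertible R' (B - B1_b n f m k B) (Cmat f m k 0) \<and>
         (\<exists>X :: monom \<Rightarrow> monom \<Rightarrow> complex. \<forall>u0 (b :: monom \<Rightarrow> complex).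
            u0 \<noteq> 0 \<longrightarrow>
            (\<forall>r\<in>R' \<union> L. (\<Sum>beta\<in>B. Cmat f m k u0 r beta * b beta) = 0) \<longrightarrow>
            (\<forall>alpha\<in>B1_b n f m k B. (\<Sum>beta\<in>B1_b n f m k B. X alpha beta * b beta) = - (1 / u0) * b alpha))"
      using R' unfolding B1_def by blast
  qed
  show ?thesis using P1 P2 by (simp add: U_def L_def Let_def)
qed


end
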